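(* There is a constant $C>0$ such that the following holds. Let $a\neq b$ be points of $\mathbb{R}/\tau\mathbb{Z}$. Let $n_1<n_1+k_1$ be two consecutive elements of $Z(a,b)$ (i.e. $k_1>0$ and no element of $Z(a,b)$ lies strictly between them), and let $n_2<n_2+k_2$ be another pair of consecutive elements of $Z(a,b)$. Then $k_1<Ck_2$.
   Context: $\tau=\frac{1+\sqrt5}{2}$. For real $x$, $x\bmod\tau$ is its image in $\mathbb{R}/\tau\mathbb{Z}$. For $a,b\in\mathbb{R}/\tau\mathbb{Z}$, $(a,b)$ denotes the open arc from $a$ to $b$ in the positive direction of the circle, and $Z(a,b)$ is the set of integers $n$ with $n\bmod\tau\in(a,b)$. The constant $C$ is independent of all variables. *)

theory Defs
  imports Complex_Main
begin

definition tau :: real where "tau = (1 + sqrt 5) / 2"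

definition tmod :: "real \<Rightarrow> real" where
  "tmod x = x - tau * of_int \<lfloor>x / tau\<rfloor>"

text \<open>Points of R/tau Z are given by real representatives. x mod tau lies on the
  open positive arc from a to b iff 0 < (x - a) mod tau < (b - a) mod tau.\<close>
definition in_arc :: "real \<Rightarrow> real \<Rightarrow> real \<Rightarrow> bool" where
  "in_arc a b x \<longleftrightarrow> 0 < tmod (x - a) \<and> tmod (x - a) < tmod (b - a)"

definition Zarc :: "real \<Rightarrow> real \<Rightarrow> int set" where
  "Zarc a b = {n. in_arc a b (of_int n)}"

definition consec :: "real \<Rightarrow> real \<Rightarrow> int \<Rightarrow> int \<Rightarrow> bool" where
  "consec a b n k \<longleftrightarrow> k > 0 \<and> n \<in> Zarc a b \<and> n + k \<in> Zarc a b \<and>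
     (\<forall>m. n < m \<and> m < n + k \<longrightarrow> m \<notin> Zarc a b)"

end

theory Submission
  imports Defs
begin


lemma norm_nonzero_aux:
  "\<forall>k w::int. nat \<bar>w\<bar> = N \<longrightarrow> k^2 - k*w - w^2 = 0 \<longrightarrow> w = 0"
proof (induction N rule: less_induct)
  case (less N)
  show ?case
  proof (intro allI impI)
    fix k w :: int
    assume hN: "nat \<bar>w\<bar> = N" and eq: "k^2 - k*w - w^2 = 0"
    have ev: "even k \<and> even w"
    proof (rule ccontr)
      assume "\<not> (even k \<and> even w)"
      then consider "odd k" "even w" | "odd k" "odd w" | "even k" "odd w" by blast
      then show False
      proof cases
        case 1
        then obtain i j where "k = 2*i+1" "w = 2*j" by (meson evenE oddE)
        moreover have "(2*i+1)^2 - (2*i+1)*(2*j) - (2*j)^2 = 2*(2*i^2+2*i - (2*i+1)*j - 2*j^2) + (1::int)"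
          by algebra
        ultimately show False using eq by presburger
      next
        case 2
        then obtain i j where "k = 2*i+1" "w = 2*j+1" by (meson oddE)
        moreover have "(2*i+1)^2 - (2*i+1)*(2*j+1) - (2*j+1)^2 = 2*(2*i^2+2*i - 2*i*j - i - j - 2*j^2 - 2*j - 1) + (1::int)"
          by algebra
        ultimately show False using eq by presburger
      next
        case 3
        then obtain i j where "k = 2*i" "w = 2*j+1" by (meson evenE oddE)
        moreover have "(2*i)^2 - (2*i)*(2*j+1) - (2*j+1)^2 = 2*(2*i^2 - 2*i*j - i - 2*j^2 - 2*j - 1) + (1::int)"
          by algebra
        ultimately show False using eq by presburger
      qed
    qed
    then obtain i j where kij: "k = 2*i" "w = 2*j" by (meson evenE)
    show "w = 0"
    proof (rule ccontr)
      assume "w \<noteq> 0"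
      then have lt: "nat \<bar>j\<bar> < N" using hN kij by auto
      have "4 * (i^2 - i*j - j^2) = 0" using eq kij by (simp add: power2_eq_square algebra_simps)
      then have "i^2 - i*j - j^2 = 0" by simp
      then have "j = 0" using less.IH[OF lt] by blast
      then show False using kij \<open>w \<noteq> 0\<close> by simp
    qed
  qed
qed

lemma norm_nonzero: "(k::int) > 0 \<Longrightarrow> k^2 - k*w - w^2 \<noteq> 0"
proof
  assume "k > 0" "k^2 - k*w - w^2 = 0"
  then have "w = 0" using norm_nonzero_aux by blast
  then show False using \<open>k > 0\<close> \<open>k^2 - k*w - w^2 = 0\<close> by simp
qed

lemma sqrt5: "2 < sqrt 5" "sqrt 5 < 3"
proof -
  show "2 < sqrt 5" by (rule real_less_rsqrt) simp
  have "sqrt 5 < sqrt 9" by (simp only: real_sqrt_less_iff)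
  moreover have "sqrt 9 = 3" by (simp add: real_sqrt_unique)
  ultimately show "sqrt 5 < 3" by linarith
qed

lemma tau_gt1: "tau > 1" and tau_lt2: "tau < 2" and tau_sq: "tau^2 = tau + 1"
  using sqrt5 by (auto simp: tau_def power2_eq_square algebra_simps)

lemma tau_pos: "tau > 0" using tau_gt1 by simp

lemma tmod_bounds: "0 \<le> tmod x" "tmod x < tau"
proof -
  have "of_int \<lfloor>x/tau\<rfloor> \<le> x/tau" "x/tau < of_int \<lfloor>x/tau\<rfloor> + 1" by linarith+
  then have "tau * of_int \<lfloor>x/tau\<rfloor> \<le> x" "x < tau * (of_int \<lfloor>x/tau\<rfloor> + 1)"
    using tau_pos by (metis mult.commute pos_le_divide_eq, metis mult.commute pos_divide_less_eq)
  then show "0 \<le> tmod x" "tmod x < tau" unfolding tmod_def by (auto simp: algebra_simps)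
qed

lemma tmod_shift: assumes "0 \<le> t" "t < tau" shows "tmod (t + tau * of_int w) = t"
proof -
  have "(t + tau * of_int w)/tau = t/tau + of_int w" using tau_pos by (simp add: field_simps)
  moreover have "\<lfloor>t/tau\<rfloor> = 0" using assms tau_pos by (simp add: floor_eq_iff)
  ultimately have "\<lfloor>(t + tau * of_int w)/tau\<rfloor> = w" by simp
  then show ?thesis unfolding tmod_def by simp
qed

lemma tmod_decomp: "\<exists>w::int. x = tmod x + tau * of_int w"
  unfolding tmod_def by auto



lemma lower:
  assumes "n \<in> Zarc a b" "n + k \<in> Zarc a b" "k > 0"
  shows "1 < 11 * tmod (b - a) * of_int k"
proof -
  define L where "L = tmod (b - a)"
  define t1 where "t1 = tmod (of_int n - a)"
  define t2 where "t2 = tmod (of_int (n + k) - a)"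
  have h1: "0 < t1" "t1 < L" "0 < t2" "t2 < L"
    using assms by (auto simp: Zarc_def in_arc_def t1_def t2_def L_def)
  have Ltau: "L < tau" using tmod_bounds L_def by simp
  obtain w1 :: int where e1: "of_int n - a = t1 + tau * of_int w1" using tmod_decomp t1_def by metis
  obtain w2 :: int where e2: "of_int (n + k) - a = t2 + tau * of_int w2" using tmod_decomp t2_def by metis
  define w where "w = w2 - w1"
  define d where "d = of_int k - of_int w * tau"
  have dd: "d = t2 - t1" using e1 e2 unfolding d_def w_def by (simp add: algebra_simps)
  have absd: "\<bar>d\<bar> < L" using dd h1 by auto
  have prod: "d * (of_int k - of_int w * (1 - tau)) = of_int (k^2 - k*w - w^2)"
  proof -
    have "d * (of_int k - of_int w * (1 - tau)) = of_int k ^ 2 - of_int k * of_int w + of_int w ^ 2 * (tau - tau^2)"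
      unfolding d_def by (simp add: algebra_simps power2_eq_square)
    also have "\<dots> = of_int (k^2 - k*w - w^2)" using tau_sq by simp
    finally show ?thesis .
  qed
  have "k^2 - k*w - w^2 \<noteq> 0" using norm_nonzero assms(3) by blast
  then have ge1: "\<bar>real_of_int (k^2 - k*w - w^2)\<bar> \<ge> 1" by linarith
  have bound: "\<bar>of_int k - of_int w * (1 - tau)\<bar> \<le> 11 * of_int k"
  proof -
    have eq: "of_int k - of_int w * (1 - tau) = d + of_int w * (2 * tau - 1)"
      by (simp add: d_def algebra_simps)
    have "\<bar>of_int w\<bar> * tau = \<bar>of_int k - d\<bar>" using tau_pos
      by (simp add: d_def abs_mult)
    also have "\<dots> \<le> of_int k + 2" using absd Ltau tau_lt2 assms(3) by linarith
    finally have wt: "\<bar>of_int w\<bar> * tau \<le> of_int k + 2" .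
    have "\<bar>of_int w :: real\<bar> \<le> \<bar>of_int w\<bar> * tau" using tau_gt1
      by (simp add: mult_le_cancel_left1)
    with wt have wb: "\<bar>of_int w :: real\<bar> \<le> of_int k + 2" by linarith
    have tb: "0 < 2 * tau - 1" "2 * tau - 1 < 3" using tau_gt1 tau_lt2 by auto
    have "\<bar>of_int w * (2 * tau - 1)\<bar> = \<bar>of_int w\<bar> * (2 * tau - 1)" using tb by (simp add: abs_mult)
    also have "\<dots> \<le> (of_int k + 2) * 3"
      using wb tb by (intro mult_mono) auto
    finally have "\<bar>of_int w * (2 * tau - 1)\<bar> \<le> 3 * of_int k + 6" by simp
    moreover have "real_of_int k \<ge> 1" using assms(3) by simp
    ultimately show ?thesis unfolding eq using absd Ltau tau_lt2
      abs_triangle_ineq[of d "of_int w * (2*tau-1)"] by linarith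
  qed
  have "1 \<le> \<bar>d\<bar> * \<bar>of_int k - of_int w * (1 - tau)\<bar>"
    using ge1 prod by (simp add: abs_mult[symmetric])
  also have "\<dots> \<le> \<bar>d\<bar> * (11 * of_int k)" using bound by (simp add: mult_left_mono)
  also have "\<dots> < L * (11 * of_int k)" using absd assms(3) by (simp add: mult_strict_right_mono)
  finally show ?thesis unfolding L_def by simp
qed

fun fibr :: "nat \<Rightarrow> nat" where
  "fibr 0 = 0" | "fibr (Suc 0) = 1" | "fibr (Suc (Suc n)) = fibr (Suc n) + fibr n"

lemma psi_sq: "(1 - tau)^2 = (1 - tau) + 1"
  using tau_sq by (simp add: power2_eq_square algebra_simps)

lemma fib_psi: "real (fibr (Suc n)) - real (fibr n) * tau = (1 - tau)^n"
proof (induction n rule: fibr.induct)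
  case 1 then show ?case by simp
next
  case 2 then show ?case by simp
next
  case (3 m)
  have "(1 - tau)^(Suc (Suc m)) = (1 - tau)^m * (1 - tau)^2" by (simp add: power_add[symmetric] power2_eq_square)
  also have "\<dots> = (1 - tau)^m * ((1 - tau) + 1)" by (simp only: psi_sq)
  also have "\<dots> = (1-tau)^(Suc m) + (1-tau)^m" by (simp add: algebra_simps)
  finally show ?case using 3 by (simp add: algebra_simps)
qed

lemma fib_le: "real (fibr n) \<le> tau^n"
proof (induction n rule: fibr.induct)
  case 1 then show ?case by simp
next
  case 2 then show ?case using tau_gt1 by simp
next
  case (3 m)
  have "tau^(Suc (Suc m)) = tau^m * tau^2" by (simp add: power_add[symmetric] power2_eq_square)
  also have "\<dots> = tau^(Suc m) + tau^m" using tau_sq by (simp add: algebra_simps)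
  finally show ?case using 3 by simp
qed

lemma fib_pos: "n > 0 \<Longrightarrow> fibr n > 0"
  by (induction n rule: fibr.induct) auto

lemma abs_psi: "\<bar>1 - tau\<bar> * tau = 1"
  using tau_sq tau_gt1 by (simp add: power2_eq_square algebra_simps)



lemma upper_gen:
  fixes p q r s n :: int and a b :: real
  defines "d1 \<equiv> of_int p - of_int r * tau" and "d2 \<equiv> of_int q - of_int s * tau"
  defines "L \<equiv> tmod (b - a)"
  assumes p: "p > 0" and q: "q \<ge> 0" and D: "of_int p * d2 \<noteq> of_int q * d1"
    and small: "\<bar>d1\<bar> + \<bar>d2\<bar> < L / 2"
  shows "\<exists>m. n < m \<and> m \<le> n + p + q \<and> m \<in> Zarc a b"
proof -
  define y where "y = a + L/2 - of_int n"
  define P where "P = real_of_int (p + q)"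
  define DD where "DD = of_int p * d2 - of_int q * d1"
  have DD0: "DD \<noteq> 0" using D DD_def by simp
  define \<alpha> where "\<alpha> = (P * d2 - of_int q * y) / DD"
  define \<beta> where "\<beta> = (of_int p * y - P * d1) / DD"
  have aD: "\<alpha> * DD = P * d2 - of_int q * y" unfolding \<alpha>_def using DD0 by simp
  have bD: "\<beta> * DD = of_int p * y - P * d1" unfolding \<beta>_def using DD0 by simp
  have "(\<alpha> * of_int p + \<beta> * of_int q) * DD = of_int p * (\<alpha> * DD) + of_int q * (\<beta> * DD)"
    by (simp add: algebra_simps)
  also have "\<dots> = of_int p * (P * d2 - of_int q * y) + of_int q * (of_int p * y - P * d1)"
    by (simp only: aD bD)
  also have "\<dots> = P * DD" by (simp add: DD_def algebra_simps)
  finally have ha: "\<alpha> * of_int p + \<beta> * of_int q = P" using DD0 by simp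
  have "(\<alpha> * d1 + \<beta> * d2) * DD = d1 * (\<alpha> * DD) + d2 * (\<beta> * DD)"
    by (simp add: algebra_simps)
  also have "\<dots> = d1 * (P * d2 - of_int q * y) + d2 * (of_int p * y - P * d1)"
    by (simp only: aD bD)
  also have "\<dots> = y * DD" by (simp add: DD_def algebra_simps)
  finally have hb: "\<alpha> * d1 + \<beta> * d2 = y" using DD0 by simp
  define A where "A = \<lfloor>\<alpha>\<rfloor>"
  define B where "B = \<lfloor>\<beta>\<rfloor>"
  define fa where "fa = \<alpha> - of_int A"
  define fb where "fb = \<beta> - of_int B"
  have fab: "0 \<le> fa" "fa < 1" "0 \<le> fb" "fb < 1" unfolding fa_def fb_def A_def B_def by linarith+
  define u where "u = A * p + B * q"
  define w where "w = A * r + B * s"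
  have u_eq: "real_of_int u = P - fa * of_int p - fb * of_int q"
    using ha unfolding u_def fa_def fb_def by (simp add: algebra_simps)
  have uw_eq: "real_of_int u - real_of_int w * tau = y - (fa * d1 + fb * d2)"
    using hb unfolding u_def w_def fa_def fb_def d1_def d2_def by (simp add: algebra_simps)
  have "fa * of_int p < of_int p" using fab p by simp
  moreover have "fb * of_int q \<le> of_int q" using fab q by (simp add: mult_left_le_one_le)
  ultimately have "real_of_int u > 0" using u_eq P_def by simp
  then have u0: "u > 0" by simp
  have "fa * of_int p \<ge> 0" "fb * of_int q \<ge> 0" using fab p q by simp_all
  then have "real_of_int u \<le> P" using u_eq by linarith
  then have u1: "u \<le> p + q" using P_def by simp
  have "\<bar>fa * d1\<bar> \<le> \<bar>d1\<bar>" using fab by (simp add: abs_mult mult_left_le_one_le)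
  moreover have "\<bar>fb * d2\<bar> \<le> \<bar>d2\<bar>" using fab by (simp add: abs_mult mult_left_le_one_le)
  ultimately have e: "\<bar>fa * d1 + fb * d2\<bar> < L / 2" using small by linarith
  define m where "m = n + u"
  define t where "t = L/2 - (fa * d1 + fb * d2)"
  have t_eq: "of_int m - a = t + tau * of_int w"
    using uw_eq unfolding m_def t_def y_def by (simp add: algebra_simps)
  have Lt: "L < tau" using tmod_bounds L_def by simp
  have t01: "0 < t" "t < L" using e unfolding t_def by linarith+
  have "tmod (of_int m - a) = t" unfolding t_eq using t01 Lt by (intro tmod_shift) auto
  then have "m \<in> Zarc a b" using t01 unfolding Zarc_def in_arc_def L_def by simp
  moreover have "n < m" "m \<le> n + p + q" using u0 u1 m_def by auto
  ultimately show ?thesis by blast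
qed

lemma exists_scale:
  assumes L0: "0 < L" and Lt: "L < tau"
  shows "\<exists>p q r s::int. p > 0 \<and> q \<ge> 0 \<and>
     of_int p * (of_int q - of_int s * tau) \<noteq> of_int q * (of_int p - of_int r * tau) \<and>
     \<bar>of_int p - of_int r * tau\<bar> + \<bar>of_int q - of_int s * tau\<bar> < L / 2 \<and>
     real_of_int (p + q) \<le> 2 * tau^5 / L"
proof -
  define M where "M = 2 * tau / L"
  have M1: "M > 1" using L0 Lt tau_pos unfolding M_def by (simp add: field_simps)
  have "\<exists>j. M < tau ^ j" using real_arch_pow[OF tau_gt1] by blast
  define j where "j = (LEAST j. M < tau ^ j)"
  have jM: "M < tau ^ j" unfolding j_def using \<open>\<exists>j. M < tau ^ j\<close> by (rule LeastI_ex)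
  have j0: "j > 0" using jM M1 by (cases j) auto
  have jm1: "\<not> M < tau ^ (j - 1)" unfolding j_def
    by (rule not_less_Least) (use j0 j_def in auto)
  define psi where "psi = 1 - tau"
  define p where "p = int (fibr (j + 2))"
  define r where "r = int (fibr (j + 1))"
  define q where "q = int (fibr (j + 1))"
  define s where "s = int (fibr j)"
  have d1: "of_int p - of_int r * tau = psi ^ (j + 1)"
    unfolding p_def r_def psi_def using fib_psi[of "j+1"] by simp
  have d2: "of_int q - of_int s * tau = psi ^ j"
    unfolding q_def s_def psi_def using fib_psi[of "j"] by simp
  have "fibr (j+2) > 0" by (rule fib_pos) simp
  then have pp: "p > 0" unfolding p_def by (simp only: of_nat_0_less_iff)
  have qq: "q \<ge> 0" unfolding q_def by simp
  have ap: "\<bar>psi\<bar> * tau = 1" using abs_psi psi_def by simp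
  have apj: "\<bar>psi\<bar> ^ j * tau ^ j = 1" using ap by (metis power_mult_distrib power_one)
  have "\<bar>psi ^ (j+1)\<bar> = \<bar>psi\<bar>^j * \<bar>psi\<bar>" by (simp only: power_abs[symmetric] abs_mult[symmetric] power_Suc2 Suc_eq_plus1[symmetric])
  then have "\<bar>psi ^ (j+1)\<bar> + \<bar>psi ^ j\<bar> = \<bar>psi\<bar>^j * (\<bar>psi\<bar> + 1)" by (simp add: power_abs distrib_left)
  also have "\<bar>psi\<bar> + 1 = tau" using tau_gt1 unfolding psi_def by simp
  also have "\<bar>psi\<bar>^j * tau = tau / tau ^ j" using apj tau_pos by (simp add: field_simps)
  also have "\<dots> < tau / M" using jM M1 tau_pos by (simp add: divide_strict_left_mono)
  also have "\<dots> = L / 2" unfolding M_def using L0 tau_pos by (simp add: field_simps)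
  finally have sm: "\<bar>psi ^ (j+1)\<bar> + \<bar>psi ^ j\<bar> < L / 2" .
  have psinz: "psi ^ j \<noteq> 0" using tau_gt1 tau_lt2 psi_def by simp
  have "of_int p * psi ^ j - of_int q * psi ^ (j+1) = psi ^ j * (of_int p - of_int q * psi)"
    by (simp add: algebra_simps)
  moreover have "of_int p - of_int q * psi > 0"
  proof -
    have "of_int q * (tau - 1) \<ge> (0::real)" using qq tau_gt1 by simp
    moreover have "of_int q * psi = - (of_int q * (tau - 1))" unfolding psi_def by (simp add: algebra_simps)
    moreover have "(of_int p :: real) > 0" using pp by simp
    ultimately show ?thesis by linarith
  qed
  ultimately have Dn: "of_int p * psi ^ j \<noteq> of_int q * psi ^ (j+1)" using psinz by auto
  have j3: "j + 3 = 4 + (j - 1)" using j0 by simp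
  have "real_of_int (p + q) = real (fibr (j + 3))" unfolding p_def q_def
    by (simp add: numeral_3_eq_3 numeral_2_eq_2)
  also have "\<dots> \<le> tau ^ (j + 3)" by (rule fib_le)
  also have "tau ^ (j + 3) = tau ^ 4 * tau ^ (j - 1)" by (simp only: j3 power_add)
  also have "\<dots> \<le> tau ^ 4 * M" using jm1 tau_pos by (simp add: not_less)
  also have "\<dots> = 2 * tau ^ 5 / L" unfolding M_def by (simp add: field_simps power_Suc[symmetric] del: power_Suc)
  finally have bd: "real_of_int (p + q) \<le> 2 * tau ^ 5 / L" .
  show ?thesis
    apply (rule exI[of _ p], rule exI[of _ q], rule exI[of _ r], rule exI[of _ s])
    unfolding d1 d2 using pp qq Dn sm bd by blast
qed

theorem lemma12:
  shows "\<exists>C::real. C > 0 \<and>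
    (\<forall>a b :: real. \<forall>n1 k1 n2 k2 :: int.
       tmod a \<noteq> tmod b \<longrightarrow> consec a b n1 k1 \<longrightarrow> consec a b n2 k2 \<longrightarrow>
       real_of_int k1 < C * real_of_int k2)"
proof (intro exI[of _ "22 * tau ^ 5"] conjI allI impI)
  show "0 < 22 * tau ^ 5" using tau_pos by simp
  fix a b :: real and n1 k1 n2 k2 :: int
  assume c1: "consec a b n1 k1" and c2: "consec a b n2 k2"
  define L where "L = tmod (b - a)"
  have L0: "0 < L" using c1 unfolding consec_def Zarc_def in_arc_def L_def by auto
  have Lt: "L < tau" using tmod_bounds L_def by simp
  obtain p q r s :: int where pq: "p > 0" "q \<ge> 0"
     "of_int p * (of_int q - of_int s * tau) \<noteq> of_int q * (of_int p - of_int r * tau)"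
     "\<bar>of_int p - of_int r * tau\<bar> + \<bar>of_int q - of_int s * tau\<bar> < L / 2"
     "real_of_int (p + q) \<le> 2 * tau^5 / L"
    using exists_scale[OF L0 Lt] by blast
  obtain m where m: "n1 < m" "m \<le> n1 + p + q" "m \<in> Zarc a b"
    using upper_gen[of p q s r b a n1] pq unfolding L_def by blast
  have "k1 \<le> p + q"
  proof (rule ccontr)
    assume "\<not> k1 \<le> p + q"
    then have "m < n1 + k1" using m by simp
    then show False using c1 m unfolding consec_def by blast
  qed
  then have "real_of_int k1 \<le> 2 * tau^5 / L" using pq(5) by linarith
  then have k1L: "real_of_int k1 * L \<le> 2 * tau^5" using L0 by (simp add: field_simps)
  have low: "1 < 11 * L * of_int k2" using lower[of n2 a b k2] c2 unfolding consec_def L_def by blast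
  have "2 * tau^5 < 2 * tau^5 * (11 * L * of_int k2)" using low tau_pos by simp
  with k1L have "real_of_int k1 * L < (22 * tau ^ 5 * real_of_int k2) * L" by (simp add: algebra_simps)
  then show "real_of_int k1 < 22 * tau ^ 5 * real_of_int k2" using L0 by simp
qed

end
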